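(* Let $a,b,c,d\in\mathbb{C}\setminus\{0\}$ and let $s$ be the polynomial vector field on $\mathbb{A}^2$ associated to the Lotka–Volterra system \[ X'=X(aY+b),\qquad Y'=Y(cX+d). \] If $b\neq d$, the only irreducible invariant curves of $s$ defined over $\mathbb{C}$ are $X=0$ and $Y=0$. If $b=d$, the only irreducible invariant curves of $s$ defined over $\mathbb{C}$ are $X=0$, $Y=0$ and $cX-aY=0$.
   Context: For $P\in\mathbb{C}[X,Y]$, the Lie derivative along $s$ is $\mathcal{L}_s(P)=X(aY+b)\,\partial P/\partial X+Y(cX+d)\,\partial P/\partial Y$. A nonzero polynomial $P$ is invariant if $P$ divides $\mathcal{L}_s(P)$; an (irreducible) invariant curve over $\mathbb{C}$ is the zero set of an (irreducible) invariant polynomial $P\in\mathbb{C}[X,Y]$. *)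

theory Defs
  imports "HOL-Computational_Algebra.Polynomial_Factorial"
begin

text \<open>Bivariate polynomials C[X,Y] are represented as complex poly poly:
  polynomials in Y whose coefficients are polynomials in X.\<close>

type_synonym bipoly = "complex poly poly"

definition varX :: bipoly where "varX = [:[:0, 1:]:]"
definition varY :: bipoly where "varY = [:0, 1:]"
definition const2 :: "complex \<Rightarrow> bipoly" where "const2 z = [:[:z:]:]"

definition dX :: "bipoly \<Rightarrow> bipoly" where "dX P = map_poly pderiv P"
definition dY :: "bipoly \<Rightarrow> bipoly" where "dY P = pderiv P"

definition eval2 :: "bipoly \<Rightarrow> complex \<Rightarrow> complex \<Rightarrow> complex" where
  "eval2 P x y = poly (poly P [:y:]) x"

definition zero_set :: "bipoly \<Rightarrow> (complex \<times> complex) set" where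
  "zero_set P = {(x, y). eval2 P x y = 0}"

definition lie_LV :: "complex \<Rightarrow> complex \<Rightarrow> complex \<Rightarrow> complex \<Rightarrow> bipoly \<Rightarrow> bipoly" where
  "lie_LV a b c d P =
     varX * (const2 a * varY + const2 b) * dX P + varY * (const2 c * varX + const2 d) * dY P"

definition invariant_LV :: "complex \<Rightarrow> complex \<Rightarrow> complex \<Rightarrow> complex \<Rightarrow> bipoly \<Rightarrow> bool" where
  "invariant_LV a b c d P \<longleftrightarrow> P \<noteq> 0 \<and> P dvd lie_LV a b c d P"

definition irr_inv_curves :: "complex \<Rightarrow> complex \<Rightarrow> complex \<Rightarrow> complex \<Rightarrow> (complex \<times> complex) set set" where
  "irr_inv_curves a b c d = {zero_set P | P. irreducible P \<and> invariant_LV a b c d P}"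

end

theory Submission
  imports Defs
begin


lemma pderiv_sum': "pderiv (sum f A) = (\<Sum>x\<in>A. pderiv (f x))"
  by (induct A rule: infinite_finite_induct) (auto simp: pderiv_add)

lemma dX_add: "dX (P + Q) = dX P + dX Q"
  unfolding dX_def by (rule poly_eqI) (simp add: coeff_map_poly pderiv_add)
lemma dX_diff: "dX (P - Q) = dX P - dX Q"
  unfolding dX_def by (rule poly_eqI) (simp add: coeff_map_poly pderiv_diff)
lemma dX_mult: "dX (P * Q) = dX P * Q + P * dX Q"
proof -
  have pm: "\<And>p q::complex poly. pderiv (p*q) = pderiv p * q + p * pderiv q" by (simp add: pderiv_mult algebra_simps)
  show ?thesis by (rule poly_eqI) (simp add: dX_def coeff_map_poly coeff_mult pderiv_sum' pm sum.distrib)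
qed
lemma dY_add: "dY (P + Q) = dY P + dY Q" unfolding dY_def by (simp add: pderiv_add)
lemma dY_diff: "dY (P - Q) = dY P - dY Q" unfolding dY_def by (simp add: pderiv_diff)
lemma dY_mult: "dY (P * Q) = dY P * Q + P * dY Q" unfolding dY_def by (simp add: pderiv_mult algebra_simps)
lemma dX_const2[simp]: "dX (const2 z) = 0" unfolding dX_def const2_def
  by (rule poly_eqI) (simp add: coeff_map_poly coeff_pCons split: nat.split)
lemma dY_const2[simp]: "dY (const2 z) = 0" unfolding dY_def const2_def by simp
lemma dX_varX[simp]: "dX varX = 1" unfolding dX_def varX_def
  by (rule poly_eqI) (simp add: coeff_map_poly coeff_pCons pderiv_pCons one_pCons split: nat.split)
lemma dY_varX[simp]: "dY varX = 0" unfolding dY_def varX_def by simp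
lemma dX_varY[simp]: "dX varY = 0" unfolding dX_def varY_def by (simp add: map_poly_pCons)
lemma dY_varY[simp]: "dY varY = 1" unfolding dY_def varY_def by (simp add: pderiv_pCons one_pCons)

lemma lie_add: "lie_LV a b c d (P + Q) = lie_LV a b c d P + lie_LV a b c d Q"
  unfolding lie_LV_def by (simp add: dX_add dY_add algebra_simps)
lemma lie_diff: "lie_LV a b c d (P - Q) = lie_LV a b c d P - lie_LV a b c d Q"
  unfolding lie_LV_def by (simp add: dX_diff dY_diff algebra_simps)
lemma lie_mult: "lie_LV a b c d (P * Q) = lie_LV a b c d P * Q + P * lie_LV a b c d Q"
  unfolding lie_LV_def by (simp add: dX_mult dY_mult algebra_simps)
lemma lie_const2[simp]: "lie_LV a b c d (const2 z) = 0"
  unfolding lie_LV_def by simp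

lemma const2_add: "const2 (x + y) = const2 x + const2 y" unfolding const2_def by simp
lemma const2_mult: "const2 (x * y) = const2 x * const2 y" unfolding const2_def by simp
lemma const2_of_nat: "const2 (of_nat n) = of_nat n" unfolding const2_def
  by (simp add: of_nat_poly)
lemma coeff_const2_mult: "coeff (const2 k * P) j = smult k (coeff P j)"
  unfolding const2_def by simp

lemma lie_coeff0: "coeff (lie_LV a b c d P) 0 = [:0,b:] * pderiv (coeff P 0)"
  unfolding lie_LV_def varX_def varY_def const2_def dX_def dY_def
  by (simp add: coeff_map_poly coeff_mult)

lemma lie_coeffS: "coeff (lie_LV a b c d P) (Suc j) =
   [:0,a:] * pderiv (coeff P j) + [:0,b:] * pderiv (coeff P (Suc j)) + of_nat (Suc j) * [:d,c:] * coeff P (Suc j)"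
  unfolding lie_LV_def varX_def varY_def const2_def dX_def dY_def
  by (rule poly_eqI) (simp add: coeff_map_poly coeff_mult coeff_pderiv algebra_simps coeff_pCons split: nat.split)

lemma deg_Xderiv_le: "degree ([:0,b:] * pderiv p) \<le> degree (p::complex poly)"
proof (cases "degree p = 0")
  case True
  then have "pderiv p = 0" by (simp add: pderiv_eq_0_iff)
  then show ?thesis by simp
next
  case False
  have "degree ([:0,b:] * pderiv p) \<le> degree [:0,b:] + degree (pderiv p)" by (rule degree_mult_le)
  also have "\<dots> \<le> 1 + (degree p - 1)" by (simp add: degree_pderiv)
  finally show ?thesis using False by simp
qed

lemma deg_Xderiv_eq: assumes "a \<noteq> 0" "degree (p::complex poly) > 0"
  shows "[:0,a:] * pderiv p \<noteq> 0 \<and> degree ([:0,a:] * pderiv p) = degree p"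
proof -
  have "pderiv p \<noteq> 0" using assms by (simp add: pderiv_eq_0_iff)
  then have "degree ([:0,a:] * pderiv p) = degree [:0,a:] + degree (pderiv p)"
    using assms by (intro degree_mult_eq) auto
  also have "\<dots> = degree p" using assms by (simp add: degree_pderiv)
  finally show ?thesis using \<open>pderiv p \<noteq> 0\<close> assms by simp
qed

lemma deg_T: assumes "c \<noteq> 0" "m > 0" "(p::complex poly) \<noteq> 0"
  shows "degree ([:0,b:] * pderiv p + of_nat m * [:d,c:] * p - smult k p) = degree p + 1"
proof -
  have e: "[:0,b:] * pderiv p + of_nat m * [:d,c:] * p - smult k p
      = [:0,b:] * pderiv p + [:of_nat m * d - k, of_nat m * c:] * p"
    by (simp add: of_nat_poly algebra_simps smult_add_left smult_diff_left)
  have d1: "degree ([:of_nat m * d - k, of_nat m * c:] * p) = degree p + 1"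
    using assms by (subst degree_mult_eq) auto
  have "degree ([:0,b:] * pderiv p) < degree ([:of_nat m * d - k, of_nat m * c:] * p)"
    using deg_Xderiv_le[of b p] d1 by simp
  then show ?thesis unfolding e using d1 by (simp add: degree_add_eq_right)
qed

lemma eqS: assumes "lie_LV a b c d P = const2 k * P"
  shows "[:0,b:] * pderiv (coeff P (Suc j)) + of_nat (Suc j) * [:d,c:] * coeff P (Suc j) - smult k (coeff P (Suc j))
       = - ([:0,a:] * pderiv (coeff P j))"
proof -
  have grp: "\<And>(x::complex poly) y z w. x + y + z = w \<Longrightarrow> y + z - w = - x" by (simp add: algebra_simps)
  have "coeff (lie_LV a b c d P) (Suc j) = coeff (const2 k * P) (Suc j)" using assms by simp
  then have H: "[:0,a:] * pderiv (coeff P j) + [:0,b:] * pderiv (coeff P (Suc j)) + of_nat (Suc j) * [:d,c:] * coeff P (Suc j) = smult k (coeff P (Suc j))"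
    unfolding lie_coeffS coeff_const2_mult .
  show ?thesis by (rule grp[OF H])
qed

lemma eq0: assumes "lie_LV a b c d P = const2 k * P"
  shows "[:0,b:] * pderiv (coeff P 0) = smult k (coeff P 0)"
proof -
  have "coeff (lie_LV a b c d P) 0 = coeff (const2 k * P) 0" using assms by simp
  then show ?thesis unfolding lie_coeff0 coeff_const2_mult .
qed

lemma lemA: assumes "c \<noteq> 0" "lie_LV a b c d P = const2 k * P" "coeff P 0 = 0"
  shows "P = 0"
proof -
  have "coeff P j = 0" for j
  proof (induct j)
    case 0 then show ?case using assms by simp
  next
    case (Suc j)
    show ?case
    proof (rule ccontr)
      assume ne: "coeff P (Suc j) \<noteq> 0"
      have "degree ([:0,b:] * pderiv (coeff P (Suc j)) + of_nat (Suc j) * [:d,c:] * coeff P (Suc j) - smult k (coeff P (Suc j))) = degree (coeff P (Suc j)) + 1"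
        by (rule deg_T[OF assms(1) _ ne]) simp
      moreover have "[:0,b:] * pderiv (coeff P (Suc j)) + of_nat (Suc j) * [:d,c:] * coeff P (Suc j) - smult k (coeff P (Suc j)) = 0"
        using eqS[OF assms(2), of j] Suc by simp
      ultimately show False by simp
    qed
  qed
  then show ?thesis by (simp add: poly_eqI)
qed

lemma coeff_Xb: "coeff ([:0,b:] * q) i = (case i of 0 \<Rightarrow> 0 | Suc i' \<Rightarrow> b * coeff q i')"
  by (simp split: nat.split)

lemma lemB: assumes "b \<noteq> 0" "c \<noteq> 0" "a \<noteq> 0" "lie_LV a b c d P = const2 k * P" "coeff P 0 \<noteq> 0"
  shows "coeff P 0 = monom (lead_coeff (coeff P 0)) (degree (coeff P 0))
     \<and> k = of_nat (degree (coeff P 0)) * b \<and> k = of_nat (degree (coeff P 0)) * d"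
proof -
  define p0 where "p0 = coeff P 0"
  define n where "n = degree p0"
  have E: "[:0,b:] * pderiv p0 = smult k p0" unfolding p0_def by (rule eq0[OF assms(4)])
  have key: "k = of_nat i * b" if ne: "coeff p0 i \<noteq> 0" for i
  proof -
    have "coeff ([:0,b:] * pderiv p0) i = coeff (smult k p0) i" using E by simp
    then have h: "coeff ([:0,b:] * pderiv p0) i = k * coeff p0 i" by simp
    show ?thesis
    proof (cases i)
      case 0
      then show ?thesis using h ne by (simp add: coeff_Xb)
    next
      case (Suc i')
      then have "b * (of_nat i * coeff p0 i) = k * coeff p0 i" using h by (simp add: coeff_Xb coeff_pderiv)
      then show ?thesis using ne by (simp add: algebra_simps)
    qed
  qed
  have p0ne: "p0 \<noteq> 0" using assms(5) p0_def by simp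
  have kn: "k = of_nat n * b" using key[of n] p0ne unfolding n_def by simp
  have mono: "p0 = monom (lead_coeff p0) n"
  proof (rule poly_eqI)
    fix i show "coeff p0 i = coeff (monom (lead_coeff p0) n) i"
    proof (cases "i = n")
      case True then show ?thesis by (simp add: n_def coeff_monom)
    next
      case False
      have "coeff p0 i = 0"
      proof (rule ccontr)
        assume ci: "coeff p0 i \<noteq> 0"
        have "of_nat i * b = of_nat n * b" using key[OF ci] kn by auto
        then have "i = n" using assms(1) by simp
        then show False using False by simp
      qed
      then show ?thesis using False by (simp add: coeff_monom)
    qed
  qed
  have kd: "k = of_nat n * d"
  proof (cases "n = 0")
    case True then show ?thesis using kn by simp
  next
    case False
    have cl: "j \<le> n \<Longrightarrow> coeff P j \<noteq> 0 \<and> degree (coeff P j) = n - j" for j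
    proof (induct j)
      case 0 then show ?case using p0ne p0_def n_def by simp
    next
      case (Suc j)
      then have ih: "coeff P j \<noteq> 0" "degree (coeff P j) = n - j" by auto
      have R: "[:0,a:] * pderiv (coeff P j) \<noteq> 0 \<and> degree ([:0,a:] * pderiv (coeff P j)) = n - j"
        unfolding ih(2)[symmetric] by (rule deg_Xderiv_eq[OF assms(3)]) (use ih Suc.prems in simp)
      note E2 = eqS[OF assms(4), of j]
      have ne: "coeff P (Suc j) \<noteq> 0"
      proof
        assume "coeff P (Suc j) = 0"
        then show False using E2 R by simp
      qed
      have "degree ([:0,b:] * pderiv (coeff P (Suc j)) + of_nat (Suc j) * [:d,c:] * coeff P (Suc j) - smult k (coeff P (Suc j))) = degree (coeff P (Suc j)) + 1"
        by (rule deg_T[OF assms(2) _ ne]) simp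
      then have "degree (- ([:0,a:] * pderiv (coeff P j))) = degree (coeff P (Suc j)) + 1" unfolding E2 .
      then have "degree (coeff P (Suc j)) + 1 = n - j" using conjunct2[OF R] by (simp only: degree_minus)
      then show ?case using ne by simp
    qed
    obtain m where m: "n = Suc m" using False by (cases n) auto
    have pn: "coeff P n \<noteq> 0" "degree (coeff P n) = 0" using cl[of n] by auto
    then obtain e where e: "coeff P n = [:e:]" by (metis degree_eq_zeroE)
    then have "e \<noteq> 0" using pn by simp
    note E2 = eqS[OF assms(4), of m]
    then have "poly ([:0,b:] * pderiv (coeff P (Suc m)) + of_nat (Suc m) * [:d,c:] * coeff P (Suc m) - smult k (coeff P (Suc m))) 0
       = poly (- ([:0,a:] * pderiv (coeff P m))) 0" by simp
    then have "of_nat n * d * e - k * e = 0" using e m by (simp add: of_nat_poly) (metis mult.commute)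
    then show ?thesis using \<open>e \<noteq> 0\<close> by (simp add: algebra_simps)
  qed
  show ?thesis using mono kn kd unfolding p0_def n_def by simp
qed

lemma lemC: assumes "P \<noteq> 0" "lie_LV a b c d P = P * K" "coeff P 0 \<noteq> 0" "poly (coeff P j0) 0 \<noteq> 0"
  shows "\<exists>k. K = const2 k"
proof -
  define m where "m = degree P"
  have degL: "degree (lie_LV a b c d P) \<le> m + 1"
  proof (rule degree_le, intro allI impI)
    fix i assume i: "m + 1 < i"
    then obtain j where j: "i = Suc j" "j > m" by (cases i) auto
    then have "coeff P j = 0" "coeff P (Suc j) = 0" by (auto simp: m_def coeff_eq_0)
    then show "coeff (lie_LV a b c d P) i = 0" using j by (simp add: lie_coeffS)
  qed
  have degK: "degree K \<le> 1"
  proof (cases "K = 0")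
    case False
    then have "degree (P * K) = m + degree K" using assms(1) by (simp add: degree_mult_eq m_def)
    then show ?thesis using degL assms(2) by simp
  qed simp
  define u where "u = coeff K 0"
  define v where "v = coeff K 1"
  have Kuv: "K = [:u, v:]"
  proof (rule poly_eqI)
    fix i show "coeff K i = coeff [:u, v:] i"
    proof (cases i)
      case 0 then show ?thesis by (simp add: u_def)
    next
      case (Suc i') then show ?thesis
        using degK by (cases i') (auto simp: v_def coeff_eq_0)
    qed
  qed
  have PK: "P * K = smult u P + pCons 0 (smult v P)" unfolding Kuv by (simp add: mult.commute)
  have E: "coeff (lie_LV a b c d P) i = coeff (smult u P + pCons 0 (smult v P)) i" for i
    using assms(2) PK by simp
  define S where "S = {j. poly (coeff P j) 0 \<noteq> 0}"
  have finS: "finite S"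
  proof (rule finite_subset[of _ "{..m}"])
    show "S \<subseteq> {..m}"
    proof
      fix j assume "j \<in> S"
      then have "coeff P j \<noteq> 0" by (auto simp: S_def)
      then show "j \<in> {..m}" using le_degree by (auto simp: m_def)
    qed
  qed simp
  have "j0 \<in> S" using assms(4) S_def by simp
  define t where "t = Max S"
  have tS: "t \<in> S" using finS \<open>j0 \<in> S\<close> unfolding t_def by (intro Max_in) auto
  have tS': "Suc t \<notin> S"
  proof
    assume "Suc t \<in> S"
    then have "Suc t \<le> Max S" by (rule Max_ge[OF finS])
    then show False using t_def by simp
  qed
  have "poly (coeff (lie_LV a b c d P) (Suc t)) 0 = poly (coeff (smult u P + pCons 0 (smult v P)) (Suc t)) 0"
    using E by simp
  moreover have "poly (coeff (lie_LV a b c d P) (Suc t)) 0 = of_nat (Suc t) * d * poly (coeff P (Suc t)) 0"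
    by (simp add: lie_coeffS)
  moreover have "poly (coeff (smult u P + pCons 0 (smult v P)) (Suc t)) 0
     = poly u 0 * poly (coeff P (Suc t)) 0 + poly v 0 * poly (coeff P t) 0" by simp
  moreover have "poly (coeff P (Suc t)) 0 = 0" using tS' by (simp add: S_def)
  ultimately have "poly v 0 * poly (coeff P t) 0 = 0" by simp
  then have "poly v 0 = 0" using tS S_def by simp
  then obtain w where w: "v = [:0,1:] * w" using poly_eq_0_iff_dvd[of v 0] by (auto elim: dvdE)
  define pm where "pm = coeff P m"
  have pmne: "pm \<noteq> 0" using assms(1) pm_def m_def by simp
  have "coeff (lie_LV a b c d P) (Suc m) = coeff (smult u P + pCons 0 (smult v P)) (Suc m)" using E by simp
  then have "[:0,a:] * pderiv pm = v * pm"
    by (simp add: lie_coeffS pm_def m_def coeff_eq_0)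
  then have "[:0,1:] * (smult a (pderiv pm)) = [:0,1:] * (w * pm)"
  proof -
    assume h: "[:0,a:] * pderiv pm = v * pm"
    have "[:0,1:] * (smult a (pderiv pm)) = [:0,a:] * pderiv pm" by simp
    also have "\<dots> = v * pm" by (rule h)
    also have "\<dots> = [:0,1:] * (w * pm)" using w by (simp only: mult.assoc)
    finally show ?thesis .
  qed
  then have wp: "smult a (pderiv pm) = w * pm" by (subst (asm) mult_left_cancel) auto
  have "w = 0"
  proof (rule ccontr)
    assume wne: "w \<noteq> 0"
    then have dwp: "degree (w * pm) = degree w + degree pm" "w * pm \<noteq> 0" using pmne by (auto simp: degree_mult_eq)
    show False
    proof (cases "degree pm = 0")
      case True
      then have "pderiv pm = 0" by (simp add: pderiv_eq_0_iff)
      then show False using wp dwp by simp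
    next
      case False
      have "degree (smult a (pderiv pm)) \<le> degree pm - 1" using degree_smult_le[of a "pderiv pm"] by (simp add: degree_pderiv)
      then show False using wp dwp False by simp
    qed
  qed
  then have v0: "v = 0" using w by simp
  have "coeff (lie_LV a b c d P) 0 = coeff (smult u P + pCons 0 (smult v P)) 0" using E by simp
  then have e0: "[:0,b:] * pderiv (coeff P 0) = u * coeff P 0" by (simp add: lie_coeff0)
  have "degree u = 0"
  proof (cases "u = 0")
    case False
    then have "degree (u * coeff P 0) = degree u + degree (coeff P 0)" using assms(3) by (simp add: degree_mult_eq)
    then show ?thesis using deg_Xderiv_le[of b "coeff P 0"] unfolding e0 by simp
  qed simp
  then obtain u0 where "u = [:u0:]" by (metis degree_eq_zeroE)
  then have "K = const2 u0" using Kuv v0 by (simp add: const2_def)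
  then show ?thesis by blast
qed


definition lineL :: "complex \<Rightarrow> complex \<Rightarrow> bipoly" where
  "lineL a c = const2 c * varX - const2 a * varY"

lemma lineL_explicit: "lineL a c = [:[:0,c:], [:-a:]:]"
  unfolding lineL_def const2_def varX_def varY_def by simp

lemma lie_varX: "lie_LV a b c d varX = varX * (const2 a * varY + const2 b)"
  unfolding lie_LV_def by simp
lemma lie_varY: "lie_LV a b c d varY = varY * (const2 c * varX + const2 d)"
  unfolding lie_LV_def by simp
lemma lie_one: "lie_LV a b c d 1 = 0"
proof -
  have "(1::bipoly) = const2 1" by (simp add: const2_def one_pCons)
  then show ?thesis by (metis lie_const2)
qed

lemma lie_L: "b = d \<Longrightarrow> lie_LV a b c d (lineL a c) = const2 b * lineL a c"
  unfolding lineL_def by (simp add: lie_diff lie_mult lie_varX lie_varY algebra_simps)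

lemma lie_Lpow: "b = d \<or> n = 0 \<Longrightarrow> lie_LV a b c d (lineL a c ^ n) = const2 (of_nat n * b) * lineL a c ^ n"
proof (induct n)
  case 0 then show ?case by (simp add: lie_one const2_def)
next
  case (Suc n)
  then have bd: "b = d" by simp
  then have IH: "lie_LV a b c d (lineL a c ^ n) = const2 (of_nat n * b) * lineL a c ^ n" using Suc by simp
  show ?case unfolding power_Suc lie_mult IH lie_L[OF bd]
    by (simp add: const2_add distrib_right algebra_simps)
qed

lemma eval2_mult: "eval2 (P * Q) x y = eval2 P x y * eval2 Q x y" unfolding eval2_def by simp
lemma eval2_diff: "eval2 (P - Q) x y = eval2 P x y - eval2 Q x y" unfolding eval2_def by simp
lemma eval2_const2[simp]: "eval2 (const2 r) x y = r" unfolding eval2_def const2_def by simp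
lemma eval2_varX[simp]: "eval2 varX x y = x" unfolding eval2_def varX_def by simp
lemma eval2_varY[simp]: "eval2 varY x y = y" unfolding eval2_def varY_def by simp

lemma zero_set_unit: "r \<noteq> 0 \<Longrightarrow> zero_set (Q * const2 r) = zero_set Q"
  unfolding zero_set_def by (simp add: eval2_mult)
lemma zero_set_unit': "r \<noteq> 0 \<Longrightarrow> zero_set (const2 r * Q) = zero_set Q"
  unfolding zero_set_def by (simp add: eval2_mult)
lemma zero_set_varX: "zero_set varX = {(x, y). x = 0}" unfolding zero_set_def by simp
lemma zero_set_varY: "zero_set varY = {(x, y). y = 0}" unfolding zero_set_def by simp
lemma zero_set_L: "zero_set (lineL a c) = {(x, y). c * x - a * y = 0}"
  unfolding zero_set_def lineL_def by (simp add: eval2_mult eval2_diff)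

lemma not_unit_deg: "degree (P::bipoly) > 0 \<Longrightarrow> \<not> is_unit P"
  by (auto simp: is_unit_poly_iff)

lemma unit_const2: "is_unit (R::bipoly) \<Longrightarrow> \<exists>r. r \<noteq> 0 \<and> R = const2 r"
  by (auto simp: is_unit_poly_iff const2_def)

lemma irr_deg1: assumes "degree (P::bipoly) = 1" "is_unit (coeff P 1)" shows "irreducible P"
proof (rule irreducibleI)
  show "P \<noteq> 0" using assms by auto
  show "\<not> is_unit P" using assms not_unit_deg by simp
  fix A B assume AB: "P = A * B"
  then have "A \<noteq> 0" "B \<noteq> 0" using \<open>P \<noteq> 0\<close> by auto
  then have dd: "degree A + degree B = 1" using AB assms by (simp add: degree_mult_eq)
  show "is_unit A \<or> is_unit B"
  proof (cases "degree A = 0")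
    case True
    then obtain \<alpha> where "A = [:\<alpha>:]" by (metis degree_eq_zeroE)
    then have "coeff P 1 = \<alpha> * coeff B 1" using AB by simp
    then have "is_unit \<alpha>" using assms(2) by (metis dvd_mult_left dvd_unit_imp_unit dvd_triv_left)
    then show ?thesis using \<open>A = [:\<alpha>:]\<close> by (simp add: is_unit_poly_iff)
  next
    case False
    then have "degree B = 0" using dd by simp
    then obtain \<beta> where "B = [:\<beta>:]" by (metis degree_eq_zeroE)
    then have "coeff P 1 = \<beta> * coeff A 1" using AB by (simp add: mult.commute)
    then have "is_unit \<beta>" using assms(2) by (metis dvd_mult_left dvd_unit_imp_unit dvd_triv_left)
    then show ?thesis using \<open>B = [:\<beta>:]\<close> by (simp add: is_unit_poly_iff)
  qed
qed

lemma irr_varY: "irreducible varY"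
  by (rule irr_deg1) (simp_all add: varY_def)

lemma irr_L: "a \<noteq> 0 \<Longrightarrow> irreducible (lineL a c)"
  by (rule irr_deg1) (simp_all add: lineL_explicit is_unit_poly_iff dvd_field_iff)

lemma irr_varX: "irreducible varX"
  unfolding varX_def irreducible_const_poly_iff
  by (rule irreducible_linear_field_poly) simp

lemma inv_varX: "invariant_LV a b c d varX"
proof -
  have "varX \<noteq> 0" by (simp add: varX_def)
  then show ?thesis unfolding invariant_LV_def lie_varX by simp
qed
lemma inv_varY: "invariant_LV a b c d varY"
proof -
  have "varY \<noteq> 0" by (simp add: varY_def)
  then show ?thesis unfolding invariant_LV_def lie_varY by simp
qed
lemma inv_L: assumes "a \<noteq> 0" "b = d" shows "invariant_LV a b c d (lineL a c)"
proof -
  have "lineL a c \<noteq> 0" using assms by (simp add: lineL_explicit)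
  then show ?thesis unfolding invariant_LV_def lie_L[OF assms(2)] by simp
qed


lemma classify:
  assumes a: "a \<noteq> 0" and b: "b \<noteq> 0" and c: "c \<noteq> 0" and d: "d \<noteq> 0"
    and irr: "irreducible P" and inv: "invariant_LV a b c d P"
  shows "zero_set P = {(x, y). x = 0} \<or> zero_set P = {(x, y). y = 0}
       \<or> (b = d \<and> zero_set P = {(x, y). c * x - a * y = 0})"
proof -
  have P0: "P \<noteq> 0" using inv by (simp add: invariant_LV_def)
  obtain K where K: "lie_LV a b c d P = P * K" using inv by (auto simp: invariant_LV_def elim: dvdE)
  show ?thesis
  proof (cases "coeff P 0 = 0")
    case True
    obtain a0 R where "P = pCons a0 R" by (cases P)
    then have PR: "P = varY * R" using True by (simp add: varY_def)
    have "\<not> is_unit varY" by (rule not_unit_deg) (simp add: varY_def)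
    then have "is_unit R" using irreducibleD[OF irr PR] by simp
    then obtain r where r: "r \<noteq> 0" "R = const2 r" using unit_const2 by blast
    then have "zero_set P = zero_set varY" using PR zero_set_unit by simp
    then show ?thesis using zero_set_varY by simp
  next
    case False
    note p0ne = False
    show ?thesis
    proof (cases "\<forall>j. poly (coeff P j) 0 = 0")
      case True
      define R where "R = map_poly (\<lambda>p. p div [:0,1:]) P"
      have PR: "P = varX * R"
      proof (rule poly_eqI)
        fix j
        have dv: "[:0,1:] dvd coeff P j" using True poly_eq_0_iff_dvd[of "coeff P j" 0] by simp
        have "coeff (varX * R) j = [:0,1:] * (coeff P j div [:0,1:])"
          by (simp add: varX_def R_def coeff_map_poly)
        also have "\<dots> = coeff P j" using dv by (rule dvd_mult_div_cancel)
        finally show "coeff P j = coeff (varX * R) j" by simp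
      qed
      have "\<not> is_unit varX" by (simp add: varX_def is_unit_poly_iff)
      then have "is_unit R" using irreducibleD[OF irr PR] by simp
      then obtain r where r: "r \<noteq> 0" "R = const2 r" using unit_const2 by blast
      then have "zero_set P = zero_set varX" using PR zero_set_unit by simp
      then show ?thesis using zero_set_varX by simp
    next
      case False
      then obtain j0 where j0: "poly (coeff P j0) 0 \<noteq> 0" by auto
      obtain k where Kk: "K = const2 k" using lemC[OF P0 K p0ne j0] by blast
      have LP: "lie_LV a b c d P = const2 k * P" using K Kk by (simp add: mult.commute)
      define n where "n = degree (coeff P 0)"
      define C where "C = lead_coeff (coeff P 0)"
      have Cne: "C \<noteq> 0" using p0ne C_def by simp
      have B: "coeff P 0 = monom C n" "k = of_nat n * b" "k = of_nat n * d"
        using lemB[OF b c a LP p0ne] unfolding C_def n_def by auto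
      have bd: "b = d \<or> n = 0" using B by auto
      define \<gamma> where "\<gamma> = C / c ^ n"
      define Q where "Q = P - const2 \<gamma> * lineL a c ^ n"
      have LQ: "lie_LV a b c d Q = const2 k * Q"
        using LP unfolding Q_def lie_diff lie_mult lie_const2 lie_Lpow[OF bd] B(2)
        by (simp add: algebra_simps)
      have cL: "coeff (lineL a c) 0 = monom c 1" by (simp add: lineL_explicit monom_Suc monom_0)
      have "coeff (const2 \<gamma> * lineL a c ^ n) 0 = smult \<gamma> (monom (c ^ n) n)"
        by (simp add: coeff_const2_mult coeff_0_power cL monom_power)
      also have "\<dots> = monom C n" using c by (simp add: \<gamma>_def smult_monom)
      finally have "coeff Q 0 = 0" unfolding Q_def using B(1) by simp
      then have "Q = 0" using lemA[OF c LQ] by simp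
      then have PL: "P = const2 \<gamma> * lineL a c ^ n" unfolding Q_def by simp
      have gne: "\<gamma> \<noteq> 0" using P0 PL by (auto simp: const2_def)
      have Lne: "lineL a c \<noteq> 0" and dL: "degree (lineL a c) = 1" using a by (simp_all add: lineL_explicit)
      have "n \<noteq> 0"
      proof
        assume "n = 0"
        then have "P = const2 \<gamma>" using PL by simp
        then have "is_unit P" using gne by (simp add: const2_def is_unit_poly_iff dvd_field_iff)
        then show False using irr by (simp add: irreducible_def)
      qed
      have "n = 1"
      proof (rule ccontr)
        assume "n \<noteq> 1"
        then obtain m where m: "n = Suc m" "m > 0" using \<open>n \<noteq> 0\<close> by (cases n) auto
        have PLL: "P = lineL a c * (const2 \<gamma> * lineL a c ^ m)" using PL m by (simp add: algebra_simps)
        have "\<not> is_unit (lineL a c)" by (rule not_unit_deg) (simp add: dL)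
        moreover have "\<not> is_unit (const2 \<gamma> * lineL a c ^ m)"
        proof (rule not_unit_deg)
          have "degree (const2 \<gamma> * lineL a c ^ m) = degree (const2 \<gamma>) + degree (lineL a c ^ m)"
            using gne Lne by (intro degree_mult_eq) (auto simp: const2_def)
          then show "degree (const2 \<gamma> * lineL a c ^ m) > 0" using m dL by (simp add: degree_power_eq Lne const2_def)
        qed
        ultimately show False using irreducibleD[OF irr PLL] by simp
      qed
      then have "b = d" using bd by simp
      moreover have "zero_set P = zero_set (lineL a c)" using PL \<open>n = 1\<close> gne zero_set_unit' by simp
      ultimately show ?thesis using zero_set_L by simp
    qed
  qed
qed

theorem mainTheorem6:
  fixes a b c d :: complex
  assumes "a \<noteq> 0" and "b \<noteq> 0" and "c \<noteq> 0" and "d \<noteq> 0"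
  shows "(b \<noteq> d \<longrightarrow> irr_inv_curves a b c d = {{(x, y). x = 0}, {(x, y). y = 0}})
       \<and> (b = d \<longrightarrow> irr_inv_curves a b c d =
            {{(x, y). x = 0}, {(x, y). y = 0}, {(x, y). c * x - a * y = 0}})"
proof -
  have X: "{(x, y). x = 0} \<in> irr_inv_curves a b c d"
    unfolding irr_inv_curves_def using irr_varX inv_varX zero_set_varX by blast
  have Y: "{(x, y). y = 0} \<in> irr_inv_curves a b c d"
    unfolding irr_inv_curves_def using irr_varY inv_varY zero_set_varY by blast
  have L: "b = d \<Longrightarrow> {(x, y). c * x - a * y = 0} \<in> irr_inv_curves a b c d"
    unfolding irr_inv_curves_def using irr_L[OF assms(1)] inv_L[OF assms(1)] zero_set_L by blast
  have S: "Z \<in> irr_inv_curves a b c d \<Longrightarrow> Z = {(x, y). x = 0} \<or> Z = {(x, y). y = 0}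
       \<or> (b = d \<and> Z = {(x, y). c * x - a * y = 0})" for Z
    unfolding irr_inv_curves_def using classify[OF assms] by blast
  show ?thesis using X Y L S by blast
qed
end
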